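(* Assume the setting of the context (good prime $p$, nonzero integer weights $a_1,\dots,a_n$). Let $x\in\mathbb F_p^n$ with $[f]_C(x)\neq0$ for every circuit $C$. Suppose $t^0\in\mathbb F_p^k$ satisfies $[f]_j(x,t^0)\neq0$ for all $j\in J$ and the Bethe ansatz equations $$\sum_{j\in J}[b^i_j]\frac{[a_j]}{[f]_j(x,t^0)}=0,\qquad i=1,\dots,k.$$ Then the vector $$F(x,t^0)=\sum_{\text{independent }\{j_1<\dots<j_k\}}\frac{[d_{j_1,\dots,j_k}]}{[f]_{j_1}(x,t^0)\cdots[f]_{j_k}(x,t^0)}F(j_1,\dots,j_k)\in V$$ satisfies the singular vector equations and is an eigenvector of the geometric Hamiltonians: $$[K]_i(x)F(x,t^0)=\frac{[a_i]}{[f]_i(x,t^0)}F(x,t^0),\qquad i=1,\dots,n.$$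
   Context: Setting. Let $k<n$ be positive integers and $J=\{1,\dots,n\}$. Fix integers $b^i_j$ ($j\in J$, $i=1,\dots,k$) such that each linear form $g_j(t)=\sum_{i=1}^kb^i_jt_i$ is nonzero and $g_1,\dots,g_n$ span a $k$-dimensional space. Put $f_j(z,t)=z_j+g_j(t)$. A circuit is a subset $C\subset J$ such that $(g_i)_{i\in C}$ are linearly dependent over $\mathbb C$ but every proper subset gives linearly independent forms; $\mathfrak C$ is the set of circuits. For each circuit $C$ fix integers $(\lambda^i_C)_{i\in J}$, not all zero, $\lambda^i_C=0$ for $i\notin C$, $\sum_i\lambda^i_Cg_i=0$, gcd $1$; $f_C(z)=\sum_i\lambda^i_Cz_i$. $[\cdot]$ is reduction mod the prime $p$, coefficientwise; $[f]_j(x,t)=x_j+\sum_i[b^i_j]t_i$, $[f]_C(x)=\sum_i[\lambda^i_C]x_i$. The prime $p$ is good if all $[g]_j,[f]_j,[f]_C$ are nonzero and the circuits of $([g]_j)$ over $\mathbb F_p$ coincide with $\mathfrak C$. A $k$-subset $\{j_1,\dots,j_k\}$ is independent if $g_{j_1},\dots,g_{j_k}$ are linearly independent; $d_{j_1,\dots,j_k}=\det_{i,l}(b^i_{j_l})$. $V$: the $\mathbb F_p$-vector space with basis $F(j_1,\dots,j_k)$ indexed by independent $\{j_1<\dots<j_k\}$, with $F(j_{\sigma(1)},\dots,j_{\sigma(k)})=\mathrm{sgn}(\sigma)F(j_1,\dots,j_k)$. Singular vector equations: for $v=\sum I_{j_1,\dots,j_k}F(j_1,\dots,j_k)$, extend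 coefficients to all $(j_1,\dots,j_k)\in J^k$ skew-symmetrically, with $I_{j_1,\dots,j_k}=0$ if entries are not distinct or not independent; require $\sum_{j\in J}[a_j]I_{j,j_2,\dots,j_k}=0$ for all $j_2,\dots,j_k\in J$. Operators $[L]_C$: for a circuit $C=\{i_1<\dots<i_r\}$ and $C_m=C\setminus\{i_m\}$: $[L]_CF(j_1,\dots,j_k)=0$ if $|\{j_1,\dots,j_k\}\cap C|<r-1$; if $\{j_1,\dots,j_k\}\cap C=C_m$ and $\{j_1,\dots,j_k\}\setminus C_m=\{s_1,\dots,s_{k-r+1}\}$, then (using the sign rule) $[L]_CF(i_1,\dots,\widehat{i_m},\dots,i_r,s_1,\dots,s_{k-r+1})=(-1)^m\sum_{l=1}^r(-1)^l[a_{i_l}]F(i_1,\dots,\widehat{i_l},\dots,i_r,s_1,\dots,s_{k-r+1})$. Geometric Hamiltonians: $[K]_i(x)=\sum_{C\in\mathfrak C}\frac{[\lambda^i_C]}{[f]_C(x)}[L]_C\in\mathrm{End}(V)$, $i\in J$. *)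

theory Defs
  imports Complex_Main "Berlekamp_Zassenhaus.Finite_Field" "Jordan_Normal_Form.Determinant"
begin

text \<open>Linear forms g_j(t) = sum_i B i j t_i (i = 1..k), with coefficients in a field.
  The family (g_j)_{j in S} is linearly independent (literal definition).\<close>
definition lin_indep_forms :: "(nat \<Rightarrow> nat \<Rightarrow> 'f::field) \<Rightarrow> nat \<Rightarrow> nat set \<Rightarrow> bool" where
  "lin_indep_forms B k S \<longleftrightarrow>
     (\<forall>c :: nat \<Rightarrow> 'f. (\<forall>i\<in>{1..k}. (\<Sum>j\<in>S. c j * B i j) = 0) \<longrightarrow> (\<forall>j\<in>S. c j = 0))"

definition is_circuit :: "(nat \<Rightarrow> nat \<Rightarrow> 'f::field) \<Rightarrow> nat \<Rightarrow> nat set \<Rightarrow> nat set \<Rightarrow> bool" where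
  "is_circuit B k J C \<longleftrightarrow> C \<subseteq> J \<and> \<not> lin_indep_forms B k C \<and> (\<forall>C'. C' \<subset> C \<longrightarrow> lin_indep_forms B k C')"

definition indepC :: "(nat \<Rightarrow> nat \<Rightarrow> int) \<Rightarrow> nat \<Rightarrow> nat set \<Rightarrow> bool" where
  "indepC b k S = lin_indep_forms (\<lambda>i j. (of_int (b i j) :: complex)) k S"

definition circuitsC :: "(nat \<Rightarrow> nat \<Rightarrow> int) \<Rightarrow> nat \<Rightarrow> nat \<Rightarrow> nat set set" where
  "circuitsC b k n = {C. is_circuit (\<lambda>i j. (of_int (b i j) :: complex)) k {1..n} C}"

definition circuitsP :: "'p::prime_card itself \<Rightarrow> (nat \<Rightarrow> nat \<Rightarrow> int) \<Rightarrow> nat \<Rightarrow> nat \<Rightarrow> nat set set" where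
  "circuitsP _ b k n = {C. is_circuit (\<lambda>i j. (of_int (b i j) :: 'p mod_ring)) k {1..n} C}"

text \<open>Independent k-subsets of J: the index set of the basis of V.\<close>
definition basis_idx :: "(nat \<Rightarrow> nat \<Rightarrow> int) \<Rightarrow> nat \<Rightarrow> nat \<Rightarrow> nat set set" where
  "basis_idx b k n = {S. S \<subseteq> {1..n} \<and> card S = k \<and> indepC b k S}"

text \<open>Sign of the permutation sorting a list of distinct numbers: (-1)^(#inversions).\<close>
definition sgn_list :: "nat list \<Rightarrow> 'f::comm_ring_1" where
  "sgn_list js = (-1) ^ card {(u, w). u < w \<and> w < length js \<and> js ! u > js ! w}"

text \<open>Elements of V are represented by their coordinate functions on the basis
  F(S), S an independent k-subset, F(S) = F(j_1,...,j_k) with j_1 < ... < j_k.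
  Fvec js is the vector F(j_1,...,j_k) for an arbitrary tuple js, using the sign rule;
  it is 0 if the entries are not distinct or not independent.\<close>
definition Fvec :: "(nat \<Rightarrow> nat \<Rightarrow> int) \<Rightarrow> nat \<Rightarrow> nat list \<Rightarrow> nat set \<Rightarrow> 'f::comm_ring_1" where
  "Fvec b k js T = (if distinct js \<and> indepC b k (set js) \<and> T = set js then sgn_list js else 0)"

text \<open>Skew-symmetric extension of the coordinates of v to all tuples.\<close>
definition Icoef :: "(nat \<Rightarrow> nat \<Rightarrow> int) \<Rightarrow> nat \<Rightarrow> (nat set \<Rightarrow> 'f::comm_ring_1) \<Rightarrow> nat list \<Rightarrow> 'f" where
  "Icoef b k v js = (if distinct js \<and> indepC b k (set js) then sgn_list js * v (set js) else 0)"

definition singular_vec :: "(nat \<Rightarrow> int) \<Rightarrow> (nat \<Rightarrow> nat \<Rightarrow> int) \<Rightarrow> nat \<Rightarrow> nat \<Rightarrow> (nat set \<Rightarrow> 'f::comm_ring_1) \<Rightarrow> bool" where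
  "singular_vec a b k n v \<longleftrightarrow>
     (\<forall>js. length js = k - 1 \<and> set js \<subseteq> {1..n} \<longrightarrow>
        (\<Sum>j\<in>{1..n}. of_int (a j) * Icoef b k v (j # js)) = 0)"

text \<open>Delete the l-th entry (1-based) of a list.\<close>
definition del_nth :: "nat \<Rightarrow> 'a list \<Rightarrow> 'a list" where
  "del_nth l xs = take (l - 1) xs @ drop l xs"

text \<open>[L]_C F(S) for a basis index S, as a vector (coordinate function).
  C = {i_1 < ... < i_r}; if S \<inter> C = C_m, write F(S) = eps F(C_m, s_1, ..., s_{k-r+1})
  with s sorted, and apply the defining formula.\<close>
definition LF :: "(nat \<Rightarrow> int) \<Rightarrow> (nat \<Rightarrow> nat \<Rightarrow> int) \<Rightarrow> nat \<Rightarrow> nat set \<Rightarrow> nat set \<Rightarrow> nat set \<Rightarrow> 'f::comm_ring_1" where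
  "LF a b k C S T =
     (if card (S \<inter> C) = card C - 1 \<and> \<not> C \<subseteq> S then
        (let cl = sorted_list_of_set C;
             m = (THE m. m \<in> {1..card C} \<and> S \<inter> C = C - {cl ! (m - 1)});
             sl = sorted_list_of_set (S - C);
             eps = (sgn_list (del_nth m cl @ sl) :: 'f)
         in eps * (-1) ^ m *
            (\<Sum>l=1..card C. (-1) ^ l * of_int (a (cl ! (l - 1))) * Fvec b k (del_nth l cl @ sl) T))
      else 0)"

definition Lop :: "(nat \<Rightarrow> int) \<Rightarrow> (nat \<Rightarrow> nat \<Rightarrow> int) \<Rightarrow> nat \<Rightarrow> nat \<Rightarrow> nat set \<Rightarrow> (nat set \<Rightarrow> 'f::comm_ring_1) \<Rightarrow> nat set \<Rightarrow> 'f" where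
  "Lop a b k n C v T = (\<Sum>S\<in>basis_idx b k n. v S * LF a b k C S T)"

definition fj :: "(nat \<Rightarrow> nat \<Rightarrow> int) \<Rightarrow> nat \<Rightarrow> (nat \<Rightarrow> 'f::comm_ring_1) \<Rightarrow> (nat \<Rightarrow> 'f) \<Rightarrow> nat \<Rightarrow> 'f" where
  "fj b k x t j = x j + (\<Sum>i=1..k. of_int (b i j) * t i)"

definition fC :: "(nat set \<Rightarrow> nat \<Rightarrow> int) \<Rightarrow> nat \<Rightarrow> (nat \<Rightarrow> 'f::comm_ring_1) \<Rightarrow> nat set \<Rightarrow> 'f" where
  "fC lam n x C = (\<Sum>i=1..n. of_int (lam C i) * x i)"

definition Kop :: "(nat \<Rightarrow> int) \<Rightarrow> (nat \<Rightarrow> nat \<Rightarrow> int) \<Rightarrow> (nat set \<Rightarrow> nat \<Rightarrow> int) \<Rightarrow> nat \<Rightarrow> nat \<Rightarrow>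
     (nat \<Rightarrow> 'f::field) \<Rightarrow> nat \<Rightarrow> (nat set \<Rightarrow> 'f) \<Rightarrow> nat set \<Rightarrow> 'f" where
  "Kop a b lam k n x i v T =
     (\<Sum>C\<in>circuitsC b k n. of_int (lam C i) / fC lam n x C * Lop a b k n C v T)"

definition dS :: "(nat \<Rightarrow> nat \<Rightarrow> int) \<Rightarrow> nat \<Rightarrow> nat set \<Rightarrow> int" where
  "dS b k S = det (mat k k (\<lambda>(i, l). b (Suc i) (sorted_list_of_set S ! l)))"

definition Fxt :: "(nat \<Rightarrow> nat \<Rightarrow> int) \<Rightarrow> nat \<Rightarrow> nat \<Rightarrow> (nat \<Rightarrow> 'f::field) \<Rightarrow> (nat \<Rightarrow> 'f) \<Rightarrow> nat set \<Rightarrow> 'f" where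
  "Fxt b k n x t S = (if S \<in> basis_idx b k n then of_int (dS b k S) / (\<Prod>j\<in>S. fj b k x t j) else 0)"

end

theory Submission
  imports Defs
begin

fun invc :: "nat list \<Rightarrow> nat" where
  "invc [] = 0"
| "invc (x # xs) = length (filter (\<lambda>y. y < x) xs) + invc xs"

lemma invc_card: "card {(u, w). u < w \<and> w < length js \<and> js ! u > js ! w} = invc js"
proof (induction js)
  case Nil
  then show ?case by simp
next
  case (Cons x xs)
  let ?A = "{(u, w). u < w \<and> w < length xs \<and> xs ! u > xs ! w}"
  let ?B = "{w. w < length xs \<and> xs ! w < x}"
  have eq: "{(u, w). u < w \<and> w < length (x#xs) \<and> (x#xs) ! u > (x#xs) ! w}
      = (\<lambda>w. (0::nat, Suc w)) ` ?B \<union> (\<lambda>(u,w). (Suc u, Suc w)) ` ?A"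
    (is "?L = ?R")
  proof (rule equalityI)
    show "?L \<subseteq> ?R"
    proof
      fix p assume "p \<in> ?L"
      then obtain u w where p: "p = (u,w)" and h: "u < w" "w < length (x#xs)" "(x#xs)!w < (x#xs)!u"
        by blast
      show "p \<in> ?R"
      proof (cases u)
        case 0
        then show ?thesis using h p by (cases w) auto
      next
        case (Suc u')
        then obtain w' where "w = Suc w'" using h by (cases w) auto
        then show ?thesis using h Suc p by (intro UnI2 rev_image_eqI[of "(u',w')"]) auto
      qed
    qed
    show "?R \<subseteq> ?L" by auto
  qed
  have fA: "finite ?A" by (rule finite_subset[of _ "{..<length xs} \<times> {..<length xs}"]) auto
  have "card ((\<lambda>w. (0::nat, Suc w)) ` ?B \<union> (\<lambda>(u,w). (Suc u, Suc w)) ` ?A)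
     = card ((\<lambda>w. (0::nat, Suc w)) ` ?B) + card ((\<lambda>(u,w). (Suc u, Suc w)) ` ?A)"
    by (rule Finite_Set.card_Un_disjoint) (use fA in auto)
  also have "card ((\<lambda>w. (0::nat, Suc w)) ` ?B) = card ?B" by (rule card_image) (auto simp: inj_on_def)
  also have "card ((\<lambda>(u,w). (Suc u, Suc w)) ` ?A) = card ?A" by (rule card_image) (auto simp: inj_on_def)
  also have "card ?B = length (filter (\<lambda>y. y < x) xs)" by (simp add: length_filter_conv_card)
  finally show ?case using eq Cons by simp
qed

lemma sgn_list_invc: "sgn_list js = ((-1) ^ invc js :: 'a::comm_ring_1)"
  by (simp add: sgn_list_def invc_card)

lemma invc_swap: "a \<noteq> b \<Longrightarrow> invc (xs @ b # a # ys) = invc (xs @ a # b # ys) + 1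
   \<or> invc (xs @ a # b # ys) = invc (xs @ b # a # ys) + 1"
proof (induction xs)
  case Nil
  then show ?case by (cases "a < b") auto
next
  case (Cons x xs)
  have "length (filter (\<lambda>y. y < x) (xs @ b # a # ys)) = length (filter (\<lambda>y. y < x) (xs @ a # b # ys))"
    by simp
  then show ?case using Cons by auto
qed

lemma sgn_list_swap: "a \<noteq> b \<Longrightarrow> (sgn_list (xs @ b # a # ys) :: 'a::comm_ring_1) = - sgn_list (xs @ a # b # ys)"
  unfolding sgn_list_invc using invc_swap[of a b xs ys] by auto

lemma sgn_list_sq: "(sgn_list js :: 'a::comm_ring_1) * sgn_list js = 1"
  unfolding sgn_list_invc by (simp add: power_mult_distrib[symmetric])

lemma invc_sorted: "sorted js \<Longrightarrow> invc js = 0"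
  by (induction js) (auto simp: filter_empty_conv not_less)

lemma sgn_list_sorted: "sorted js \<Longrightarrow> sgn_list js = 1"
  unfolding sgn_list_invc by (simp add: invc_sorted)

lemma Q_insort:
  assumes swp: "\<And>xs a b ys. length (xs @ a # b # ys) = k \<Longrightarrow> a \<noteq> b \<Longrightarrow> Q (xs @ b # a # ys) = Q (xs @ a # b # ys)"
  shows "length (pre @ x # ys) = k \<Longrightarrow> Q (pre @ x # ys) = Q (pre @ insort x ys)"
proof (induction ys arbitrary: pre)
  case Nil
  then show ?case by simp
next
  case (Cons y ys)
  show ?case
  proof (cases "x \<le> y")
    case True
    then show ?thesis by simp
  next
    case False
    have "Q (pre @ x # y # ys) = Q (pre @ y # x # ys)"
      using swp[of pre y x ys] False Cons.prems by auto
    also have "\<dots> = Q ((pre @ [y]) @ x # ys)" by simp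
    also have "\<dots> = Q ((pre @ [y]) @ insort x ys)" by (rule Cons.IH) (use Cons.prems in simp)
    finally show ?thesis using False by simp
  qed
qed

lemma Q_sort:
  assumes swp: "\<And>xs a b ys. length (xs @ a # b # ys) = k \<Longrightarrow> a \<noteq> b \<Longrightarrow> Q (xs @ b # a # ys) = Q (xs @ a # b # ys)"
  shows "length (pre @ js) = k \<Longrightarrow> Q (pre @ js) = Q (pre @ sort js)"
proof (induction js arbitrary: pre)
  case Nil
  then show ?case by simp
next
  case (Cons x xs)
  have "Q (pre @ x # xs) = Q ((pre @ [x]) @ xs)" by simp
  also have "\<dots> = Q ((pre @ [x]) @ sort xs)" by (rule Cons.IH) (use Cons.prems in simp)
  also have "\<dots> = Q (pre @ insort x (sort xs))"
    using Q_insort[of k Q pre x "sort xs", OF swp] Cons.prems by simp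
  finally show ?case by simp
qed

lemma alt_sort:
  fixes P :: "nat list \<Rightarrow> 'a::comm_ring_1"
  assumes swp: "\<And>xs a b ys. length (xs @ a # b # ys) = k \<Longrightarrow> a \<noteq> b \<Longrightarrow> P (xs @ b # a # ys) = - P (xs @ a # b # ys)"
    and len: "length js = k"
  shows "sgn_list js * P js = P (sort js)"
proof -
  define Q where "Q js = sgn_list js * P js" for js
  have h: "Q (xs @ b # a # ys) = Q (xs @ a # b # ys)" if "length (xs @ a # b # ys) = k" "a \<noteq> b" for xs a b ys
  proof -
    have "(sgn_list (xs @ b # a # ys) :: 'a) = - sgn_list (xs @ a # b # ys)" by (rule sgn_list_swap[OF that(2)])
    then show ?thesis unfolding Q_def using swp[OF that] by simp
  qed
  have "Q ([] @ js) = Q ([] @ sort js)" using Q_sort[of k Q "[]" js, OF h] len by simp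
  then show ?thesis unfolding Q_def by (simp add: sgn_list_sorted)
qed

definition cm :: "(nat \<Rightarrow> nat \<Rightarrow> 'a) \<Rightarrow> nat \<Rightarrow> nat list \<Rightarrow> 'a mat" where
  "cm B k js = mat k k (\<lambda>(i, l). B (Suc i) (js ! l))"

definition DD :: "(nat \<Rightarrow> nat \<Rightarrow> 'a::comm_ring_1) \<Rightarrow> nat \<Rightarrow> nat list \<Rightarrow> 'a" where
  "DD B k js = det (cm B k js)"

lemma DD_swap:
  assumes "length (xs @ a # b # ys) = k"
  shows "DD B k (xs @ b # a # ys) = - DD B k (xs @ a # b # ys)"
proof -
  let ?u = "length xs"
  have "cm B k (xs @ b # a # ys) = swapcols ?u (Suc ?u) (cm B k (xs @ a # b # ys))"
    by (rule eq_matI) (use assms in \<open>auto simp: cm_def nth_append nth_Cons split: nat.splits\<close>)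
  moreover have "det (swapcols ?u (Suc ?u) (cm B k (xs @ a # b # ys))) = - det (cm B k (xs @ a # b # ys))"
    by (rule det_swapcols[where n=k]) (use assms in \<open>auto simp: cm_def\<close>)
  ultimately show ?thesis unfolding DD_def by simp
qed

lemma DD_sort: "length js = k \<Longrightarrow> sgn_list js * DD B k js = DD B k (sort js)"
  by (rule alt_sort[where k=k]) (auto intro: DD_swap)

definition lil :: "(nat \<Rightarrow> nat \<Rightarrow> 'a::field) \<Rightarrow> nat \<Rightarrow> nat list \<Rightarrow> bool" where
  "lil B k js \<longleftrightarrow> (\<forall>c. (\<forall>i\<in>{1..k}. (\<Sum>q<length js. c q * B i (js ! q)) = 0) \<longrightarrow> (\<forall>q<length js. c q = 0))"

lemma cm_mult_vec:
  fixes B :: "nat \<Rightarrow> nat \<Rightarrow> 'a::comm_ring_1"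
  assumes "i < k" "dim_vec v = k"
  shows "(cm B k js *\<^sub>v v) $ i = (\<Sum>q<k. v $ q * B (Suc i) (js ! q))"
  using assms by (auto simp: cm_def scalar_prod_def row_def atLeast0LessThan mult.commute intro!: sum.cong)

lemma DD_ne0_iff:
  fixes B :: "nat \<Rightarrow> nat \<Rightarrow> 'a::field"
  assumes len: "length js = k"
  shows "DD B k js \<noteq> 0 \<longleftrightarrow> lil B k js"
proof -
  have A: "cm B k js \<in> carrier_mat k k" by (simp add: cm_def)
  have "DD B k js = 0 \<longleftrightarrow> \<not> lil B k js"
  proof
    assume "DD B k js = 0"
    then obtain v where v: "v \<in> carrier_vec k" "v \<noteq> 0\<^sub>v k" "cm B k js *\<^sub>v v = 0\<^sub>v k"
      using det_0_iff_vec_prod_zero_field[OF A] unfolding DD_def by blast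
    have rel: "\<forall>i\<in>{1..k}. (\<Sum>q<length js. v $ q * B i (js ! q)) = 0"
    proof
      fix i assume i: "i \<in> {1..k}"
      have "(cm B k js *\<^sub>v v) $ (i - 1) = 0" using v(3) i by auto
      then show "(\<Sum>q<length js. v $ q * B i (js ! q)) = 0"
        using cm_mult_vec[of "i - 1" k v B js] i v(1) len by auto
    qed
    obtain q where "q < k" "v $ q \<noteq> 0" using v(1,2) by (auto simp: vec_eq_iff)
    then show "\<not> lil B k js" unfolding lil_def using rel len by auto
  next
    assume "\<not> lil B k js"
    then obtain c q where rel: "\<forall>i\<in>{1..k}. (\<Sum>q<length js. c q * B i (js ! q)) = 0"
      and q: "q < length js" "c q \<noteq> 0" unfolding lil_def by blast
    define v where "v = vec k c"
    have "v \<in> carrier_vec k" "v \<noteq> 0\<^sub>v k" using q len by (auto simp: v_def vec_eq_iff)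
    moreover have "cm B k js *\<^sub>v v = 0\<^sub>v k"
    proof (rule eq_vecI)
      fix i assume "i < dim_vec (0\<^sub>v k :: 'a vec)"
      then have i: "i < k" by simp
      have "(cm B k js *\<^sub>v v) $ i = (\<Sum>q<k. c q * B (Suc i) (js ! q))"
        using cm_mult_vec[of i k v B js] i by (simp add: v_def)
      also have "\<dots> = 0" using rel i len by auto
      finally show "(cm B k js *\<^sub>v v) $ i = 0\<^sub>v k $ i" using i by simp
    qed (simp add: cm_def)
    ultimately show "DD B k js = 0"
      using det_0_iff_vec_prod_zero_field[OF A] unfolding DD_def by blast
  qed
  then show ?thesis by blast
qed

lemma sum_set_nth: "distinct js \<Longrightarrow> (\<Sum>j\<in>set js. f j) = (\<Sum>q<length js. f (js ! q))"
  by (simp add: sum_list_distinct_conv_sum_set[symmetric] sum_list_sum_nth atLeast0LessThan)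

lemma lif_set_iff:
  assumes d: "distinct js"
  shows "lin_indep_forms B k (set js) \<longleftrightarrow> lil B k js"
proof
  assume h: "lin_indep_forms B k (set js)"
  show "lil B k js" unfolding lil_def
  proof (intro allI impI)
    fix c q assume rel: "\<forall>i\<in>{1..k}. (\<Sum>q<length js. c q * B i (js ! q)) = 0" and q: "q < length js"
    define c' where "c' j = c (THE q. q < length js \<and> js ! q = j)" for j
    have c': "c' (js ! q) = c q" if "q < length js" for q
    proof -
      have "(THE q'. q' < length js \<and> js ! q' = js ! q) = q"
        using that d by (auto simp: nth_eq_iff_index_eq)
      then show ?thesis by (simp add: c'_def)
    qed
    have "\<forall>i\<in>{1..k}. (\<Sum>j\<in>set js. c' j * B i j) = 0"
      using rel by (simp add: sum_set_nth[OF d] c')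
    then have "\<forall>j\<in>set js. c' j = 0" using h unfolding lin_indep_forms_def by blast
    then show "c q = 0" using q c'[OF q] by auto
  qed
next
  assume h: "lil B k js"
  show "lin_indep_forms B k (set js)" unfolding lin_indep_forms_def
  proof (intro allI impI)
    fix c assume rel: "\<forall>i\<in>{1..k}. (\<Sum>j\<in>set js. c j * B i j) = 0"
    then have "\<forall>i\<in>{1..k}. (\<Sum>q<length js. c (js ! q) * B i (js ! q)) = 0"
      by (simp add: sum_set_nth[OF d])
    then have "\<forall>q<length js. c (js ! q) = 0" using h unfolding lil_def
      by (auto dest!: spec[of _ "\<lambda>q. c (js ! q)"])
    then show "\<forall>j\<in>set js. c j = 0" by (auto simp: in_set_conv_nth)
  qed
qed

lemma del_nth_nth:
  assumes "q < length L" "j < length L - 1"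
  shows "del_nth (Suc q) L ! j = L ! (if j < q then j else Suc j)"
  using assms by (auto simp: del_nth_def nth_append min_def)

lemma length_del_nth: "1 \<le> l \<Longrightarrow> l \<le> length L \<Longrightarrow> length (del_nth l L) = length L - 1"
  by (auto simp: del_nth_def min_def)

lemma cramer:
  fixes B :: "nat \<Rightarrow> nat \<Rightarrow> 'a::comm_ring_1"
  assumes len: "length L = Suc k" and i: "i \<in> {1..k}"
  shows "(\<Sum>q<Suc k. (-1) ^ q * DD B k (del_nth (Suc q) L) * B i (L ! q)) = 0"
proof -
  define A where "A = mat (Suc k) (Suc k) (\<lambda>(r, q). if r = 0 then B i (L ! q) else B r (L ! q))"
  have A: "A \<in> carrier_mat (Suc k) (Suc k)" by (simp add: A_def)
  have "det A = 0"
    by (rule det_identical_rows[OF A, of 0 i]) (use i in \<open>auto simp: A_def row_def\<close>)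
  moreover have "det A = (\<Sum>q<Suc k. A $$ (0, q) * cofactor A 0 q)"
    by (rule laplace_expansion_row[OF A]) simp
  moreover have "mat_delete A 0 q = cm B k (del_nth (Suc q) L)" if "q < Suc k" for q
    by (rule eq_matI) (use that len in \<open>auto simp: mat_delete_def A_def cm_def del_nth_nth\<close>)
  ultimately show ?thesis
    by (auto simp: cofactor_def DD_def A_def mult_ac)
qed

definition rel :: "(nat \<Rightarrow> nat \<Rightarrow> 'a::field) \<Rightarrow> nat \<Rightarrow> (nat \<Rightarrow> 'a) \<Rightarrow> nat set \<Rightarrow> bool" where
  "rel B k c S \<longleftrightarrow> (\<forall>i\<in>{1..k}. (\<Sum>j\<in>S. c j * B i j) = 0)"

lemma dep_rel: "\<not> lin_indep_forms B k S \<longleftrightarrow> (\<exists>c. rel B k c S \<and> (\<exists>j\<in>S. c j \<noteq> 0))"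
  unfolding lin_indep_forms_def rel_def by blast

lemma indep_rel: "lin_indep_forms B k S \<Longrightarrow> rel B k c S \<Longrightarrow> j \<in> S \<Longrightarrow> c j = 0"
  unfolding lin_indep_forms_def rel_def by blast

lemma rel_subset:
  assumes "finite S" "S' \<subseteq> S" "\<forall>j\<in>S - S'. c j = 0"
  shows "rel B k c S \<longleftrightarrow> rel B k c S'"
proof -
  have "(\<Sum>j\<in>S. c j * B i j) = (\<Sum>j\<in>S'. c j * B i j)" for i
    by (rule sum.mono_neutral_right) (use assms in auto)
  then show ?thesis unfolding rel_def by simp
qed

lemma indep_subset:
  assumes "finite S" "lin_indep_forms B k S" "S' \<subseteq> S"
  shows "lin_indep_forms B k S'"
proof (rule ccontr)
  assume "\<not> lin_indep_forms B k S'"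
  then obtain c j where c: "rel B k c S'" "j \<in> S'" "c j \<noteq> 0" unfolding dep_rel by blast
  define c' where "c' x = (if x \<in> S' then c x else 0)" for x
  have "rel B k c' S'" using c(1) unfolding rel_def c'_def by (simp cong: sum.cong)
  then have "rel B k c' S" using rel_subset[of S S' c'] assms by (auto simp: c'_def)
  then have "c' j = 0" using indep_rel[OF assms(2)] c(2) assms(3) by auto
  then show False using c by (auto simp: c'_def)
qed

lemma dep_has_circuit:
  assumes "finite S" "S \<subseteq> J" "\<not> lin_indep_forms B k S"
  shows "\<exists>C. is_circuit B k J C \<and> C \<subseteq> S"
  using assms
proof (induction "card S" arbitrary: S rule: less_induct)
  case less
  show ?case
  proof (cases "\<forall>C'. C' \<subset> S \<longrightarrow> lin_indep_forms B k C'")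
    case True
    then show ?thesis using less.prems unfolding is_circuit_def by blast
  next
    case False
    then obtain S' where S': "S' \<subset> S" "\<not> lin_indep_forms B k S'" by blast
    have "card S' < card S" using S'(1) less.prems(1) by (simp add: psubset_card_mono)
    have "finite S'" "S' \<subseteq> J" using S'(1) less.prems(1,2) by (auto dest: finite_subset)
    then obtain C where "is_circuit B k J C" "C \<subseteq> S'"
      using less.hyps[OF \<open>card S' < card S\<close> _ _ S'(2)] by blast
    then show ?thesis using S' by blast
  qed
qed

lemma indep_iff_no_circuit:
  assumes "finite S" "S \<subseteq> J"
  shows "lin_indep_forms B k S \<longleftrightarrow> \<not> (\<exists>C. is_circuit B k J C \<and> C \<subseteq> S)"
proof
  assume i: "lin_indep_forms B k S"
  show "\<not> (\<exists>C. is_circuit B k J C \<and> C \<subseteq> S)"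
  proof
    assume "\<exists>C. is_circuit B k J C \<and> C \<subseteq> S"
    then obtain C where C: "is_circuit B k J C" "C \<subseteq> S" by blast
    have "lin_indep_forms B k C" by (rule indep_subset[OF assms(1) i C(2)])
    then show False using C(1) unfolding is_circuit_def by simp
  qed
next
  assume "\<not> (\<exists>C. is_circuit B k J C \<and> C \<subseteq> S)"
  then show "lin_indep_forms B k S" using dep_has_circuit[OF assms] by blast
qed


lemma circuit_support:
  assumes C: "is_circuit B k J C" and fin: "finite C"
    and r: "rel B k c C" and nz: "\<exists>j\<in>C. c j \<noteq> 0"
  shows "\<forall>j\<in>C. c j \<noteq> 0"
proof (rule ccontr)
  assume "\<not> (\<forall>j\<in>C. c j \<noteq> 0)"
  then obtain j0 where j0: "j0 \<in> C" "c j0 = 0" by blast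
  define Z where "Z = {j\<in>C. c j \<noteq> 0}"
  have "Z \<subset> C" using j0 by (auto simp: Z_def)
  then have iz: "lin_indep_forms B k Z" using C unfolding is_circuit_def by simp
  have zs: "Z \<subseteq> C" "\<forall>j\<in>C - Z. c j = 0" by (auto simp: Z_def)
  have "rel B k c Z" using rel_subset[OF fin zs] r by simp
  then have "\<forall>j\<in>Z. c j = 0" using indep_rel[OF iz] by blast
  moreover obtain j1 where "j1 \<in> C" "c j1 \<noteq> 0" using nz by blast
  ultimately show False by (simp add: Z_def)
qed

lemma circuit_unique:
  assumes fT: "finite T" and iT: "lin_indep_forms B k T" and j: "j \<notin> T"
    and C1: "is_circuit B k J C1" "C1 \<subseteq> insert j T" "j \<in> C1"
    and C2: "is_circuit B k J C2" "C2 \<subseteq> insert j T" "j \<in> C2"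
  shows "C1 = C2"
proof -
  have f1: "finite C1" "finite C2" using C1(2) C2(2) fT finite_subset by auto
  obtain c1 where c1: "rel B k c1 C1" "\<exists>j\<in>C1. c1 j \<noteq> 0"
    using C1(1) unfolding is_circuit_def dep_rel by blast
  obtain c2 where c2: "rel B k c2 C2" "\<exists>j\<in>C2. c2 j \<noteq> 0"
    using C2(1) unfolding is_circuit_def dep_rel by blast
  have s1: "\<forall>m\<in>C1. c1 m \<noteq> 0" by (rule circuit_support[OF C1(1) f1(1) c1])
  have s2: "\<forall>m\<in>C2. c2 m \<noteq> 0" by (rule circuit_support[OF C2(1) f1(2) c2])
  define e1 where "e1 m = (if m \<in> C1 then c1 m else 0)" for m
  define e2 where "e2 m = (if m \<in> C2 then c2 m else 0)" for m
  have r1: "rel B k e1 (insert j T)"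
  proof -
    have "rel B k e1 C1" using c1(1) unfolding rel_def e1_def by (simp cong: sum.cong)
    then show ?thesis using rel_subset[of "insert j T" C1 e1] fT C1(2) by (auto simp: e1_def)
  qed
  have r2: "rel B k e2 (insert j T)"
  proof -
    have "rel B k e2 C2" using c2(1) unfolding rel_def e2_def by (simp cong: sum.cong)
    then show ?thesis using rel_subset[of "insert j T" C2 e2] fT C2(2) by (auto simp: e2_def)
  qed
  define d where "d m = e2 j * e1 m - e1 j * e2 m" for m
  have "rel B k d (insert j T)" unfolding rel_def
  proof
    fix i assume i: "i \<in> {1..k}"
    have "(\<Sum>m\<in>insert j T. d m * B i m) = e2 j * (\<Sum>m\<in>insert j T. e1 m * B i m) - e1 j * (\<Sum>m\<in>insert j T. e2 m * B i m)"
      by (simp only: d_def left_diff_distrib sum_subtractf sum_distrib_left mult.assoc)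
    then show "(\<Sum>m\<in>insert j T. d m * B i m) = 0" using r1 r2 i unfolding rel_def by simp
  qed
  moreover have "\<forall>ja\<in>insert j T - T. d ja = 0" by (auto simp: d_def mult.commute)
  ultimately have "rel B k d T" using rel_subset[of "insert j T" T d] fT by auto
  then have d0: "\<forall>m\<in>T. d m = 0" using indep_rel[OF iT] by blast
  have nz: "e1 j \<noteq> 0" "e2 j \<noteq> 0" using s1 s2 C1(3) C2(3) by (auto simp: e1_def e2_def)
  have "m \<in> C1 \<longleftrightarrow> m \<in> C2" for m
  proof (cases "m \<in> insert j T")
    case True
    show ?thesis
    proof (cases "m = j")
      case True then show ?thesis using C1(3) C2(3) by simp
    next
      case False
      then have "m \<in> T" using \<open>m \<in> insert j T\<close> by simp
      then have eq: "e2 j * e1 m = e1 j * e2 m" using d0 by (auto simp: d_def)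
      show ?thesis
      proof
        assume "m \<in> C1"
        then have "e1 m \<noteq> 0" using s1 by (simp add: e1_def)
        then have "e2 m \<noteq> 0" using eq nz by auto
        then show "m \<in> C2" by (simp add: e2_def split: if_splits)
      next
        assume "m \<in> C2"
        then have "e2 m \<noteq> 0" using s2 by (simp add: e2_def)
        then have "e1 m \<noteq> 0" using eq nz by auto
        then show "m \<in> C1" by (simp add: e1_def split: if_splits)
      qed
    qed
  next
    case False
    then show ?thesis using C1(2) C2(2) by auto
  qed
  then show ?thesis by blast
qed

lemma insert_dep:
  fixes B :: "nat \<Rightarrow> nat \<Rightarrow> 'a::field"
  assumes fT: "finite T" and cT: "card T = k" and iT: "lin_indep_forms B k T" and j: "j \<notin> T"
  shows "\<not> lin_indep_forms B k (insert j T)"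
proof -
  define ts where "ts = sorted_list_of_set T"
  define L where "L = j # ts"
  have dts: "distinct ts" "set ts = T" "length ts = k" using fT cT by (auto simp: ts_def)
  have dL: "distinct L" "set L = insert j T" "length L = Suc k" using dts j by (auto simp: L_def)
  have "lil B k ts" using iT lif_set_iff[OF dts(1), of B k] dts(2) by simp
  then have "DD B k ts \<noteq> 0" using DD_ne0_iff[OF dts(3), of B] by simp
  moreover have "del_nth (Suc 0) L = ts" by (simp add: L_def del_nth_def)
  ultimately have "\<not> lil B k L"
    unfolding lil_def using cramer[where B=B, OF dL(3)] dL(3)
    by (auto intro!: exI[of _ "\<lambda>q. (-1) ^ q * DD B k (del_nth (Suc q) L)"] exI[of _ 0]
        simp: mult.assoc)
  then show ?thesis using lif_set_iff[OF dL(1), of B k] dL(2) by simp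
qed

lemma sum_skip:
  assumes "l < Suc k"
  shows "(\<Sum>q<Suc k. g q) = g l + (\<Sum>q'<k. g (if q' < l then q' else Suc q'))"
proof -
  let ?idx = "\<lambda>q'. if q' < l then q' else Suc q'"
  have eq: "{..<Suc k} = insert l (?idx ` {..<k})"
  proof (intro equalityI subsetI)
    fix q assume q: "q \<in> {..<Suc k}"
    show "q \<in> insert l (?idx ` {..<k})"
    proof (cases "q < l")
      case True then show ?thesis using assms by (auto simp: image_iff)
    next
      case False
      then show ?thesis using assms q
        by (cases "q = l") (auto simp: image_iff intro!: bexI[of _ "q - 1"])
    qed
  next
    fix q assume "q \<in> insert l (?idx ` {..<k})"
    then show "q \<in> {..<Suc k}" using assms by auto
  qed
  have inj: "inj_on ?idx {..<k}" by (auto simp: inj_on_def split: if_splits)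
  have nl: "l \<notin> ?idx ` {..<k}" by auto
  have "sum g {..<Suc k} = sum g (insert l (?idx ` {..<k}))" using eq by simp
  also have "\<dots> = g l + sum g (?idx ` {..<k})" by (rule sum.insert) (use nl in auto)
  also have "sum g (?idx ` {..<k}) = sum (g \<circ> ?idx) {..<k}" by (rule sum.reindex[OF inj])
  finally show ?thesis by simp
qed

lemma rel_span:
  fixes B :: "nat \<Rightarrow> nat \<Rightarrow> 'a::field"
  assumes len: "length L = Suc k" and l: "l < Suc k"
    and nz: "DD B k (del_nth (Suc l) L) \<noteq> 0"
    and mu: "\<forall>i\<in>{1..k}. (\<Sum>q<Suc k. \<mu> q * B i (L ! q)) = 0"
    and E: "E = (\<lambda>q. (-1) ^ q * DD B k (del_nth (Suc q) L))"
    and q: "q < Suc k"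
  shows "\<mu> q * E l = \<mu> l * E q"
proof -
  define \<nu> where "\<nu> q = \<mu> q * E l - \<mu> l * E q" for q
  have Erel: "\<forall>i\<in>{1..k}. (\<Sum>q<Suc k. E q * B i (L ! q)) = 0"
    using cramer[where B=B, OF len] unfolding E by (simp add: mult.assoc del: sum.lessThan_Suc)
  have nrel: "(\<Sum>q<Suc k. \<nu> q * B i (L ! q)) = 0" if i: "i \<in> {1..k}" for i
  proof -
    have "(\<Sum>q<Suc k. \<nu> q * B i (L ! q))
        = E l * (\<Sum>q<Suc k. \<mu> q * B i (L ! q)) - \<mu> l * (\<Sum>q<Suc k. E q * B i (L ! q))"
      by (simp add: \<nu>_def sum_distrib_left sum_subtractf algebra_simps)
    then show ?thesis using mu Erel i by simp
  qed
  have nl: "\<nu> l = 0" by (simp add: \<nu>_def mult.commute)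
  have ld: "length (del_nth (Suc l) L) = k" using len l by (simp add: length_del_nth)
  have lilD: "lil B k (del_nth (Suc l) L)" using nz DD_ne0_iff[OF ld, of B] by simp
  have relD: "\<forall>i\<in>{1..k}. (\<Sum>q'<length (del_nth (Suc l) L).
       \<nu> (if q' < l then q' else Suc q') * B i (del_nth (Suc l) L ! q')) = 0"
  proof
    fix i assume i: "i \<in> {1..k}"
    have "(\<Sum>q'<k. \<nu> (if q' < l then q' else Suc q') * B i (del_nth (Suc l) L ! q'))
       = (\<Sum>q'<k. (\<lambda>q. \<nu> q * B i (L ! q)) (if q' < l then q' else Suc q'))"
      by (rule sum.cong) (use len l in \<open>auto simp: del_nth_nth\<close>)
    also have "\<dots> = (\<Sum>q<Suc k. \<nu> q * B i (L ! q))" using sum_skip[OF l, of "\<lambda>q. \<nu> q * B i (L ! q)"] nl by simp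
    also have "\<dots> = 0" using nrel[OF i] .
    finally show "(\<Sum>q'<length (del_nth (Suc l) L).
       \<nu> (if q' < l then q' else Suc q') * B i (del_nth (Suc l) L ! q')) = 0" using ld by simp
  qed
  have "\<forall>q'<length (del_nth (Suc l) L). \<nu> (if q' < l then q' else Suc q') = 0"
    using mp[OF spec[OF lilD[unfolded lil_def], of "\<lambda>q'. \<nu> (if q' < l then q' else Suc q')"] relD] by simp
  then have z: "\<forall>q'<k. \<nu> (if q' < l then q' else Suc q') = 0" using ld by simp
  have "\<nu> q = 0"
  proof (cases "q = l")
    case True then show ?thesis using nl by simp
  next
    case False
    show ?thesis
    proof (cases "q < l")
      case True then show ?thesis using z[rule_format, of q] l by simp
    next
      case False
      then have "l < q" "q - 1 < k" "\<not> q - 1 < l" "Suc (q - 1) = q" using \<open>q \<noteq> l\<close> q by auto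
      then show ?thesis using z[rule_format, of "q - 1"] by simp
    qed
  qed
  then show ?thesis by (simp add: \<nu>_def)
qed

lemma del_nth_set:
  assumes d: "distinct xs" and l: "1 \<le> l" "l \<le> length xs"
  shows "set (del_nth l xs) = set xs - {xs ! (l - 1)}" "distinct (del_nth l xs)"
proof -
  define ys where "ys = take (l - 1) xs"
  define zs where "zs = drop l xs"
  define c where "c = xs ! (l - 1)"
  have e: "xs = ys @ c # zs" unfolding ys_def zs_def c_def
    using id_take_nth_drop[of "l - 1" xs] l by simp
  have dl: "del_nth l xs = ys @ zs" unfolding del_nth_def ys_def zs_def by simp
  have dd: "distinct (ys @ c # zs)" using d e by metis
  have se: "set xs = set ys \<union> insert c (set zs)" using e by (metis set_append list.set(2))
  show "set (del_nth l xs) = set xs - {c}" unfolding dl se using dd by auto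
  show "distinct (del_nth l xs)" unfolding dl using dd by auto
qed

lemma sgn_cancel: "(sgn_list js :: 'a::comm_ring_1) * (sgn_list js * y) = y"
  by (simp add: mult.assoc[symmetric] sgn_list_sq)

lemma del_nth_append: "1 \<le> l \<Longrightarrow> l \<le> length xs \<Longrightarrow> del_nth l (xs @ ys) = del_nth l xs @ ys"
  by (simp add: del_nth_def)

locale setting =
  fixes n k :: nat
    and b :: "nat \<Rightarrow> nat \<Rightarrow> int"
    and lam :: "nat set \<Rightarrow> nat \<Rightarrow> int"
    and a :: "nat \<Rightarrow> int"
    and x t0 :: "nat \<Rightarrow> 'p::prime_card mod_ring"
  assumes k_pos: "0 < k"
    and lam_circ: "\<forall>C\<in>circuitsC b k n.
        (\<exists>i\<in>C. lam C i \<noteq> 0) \<and> (\<forall>i. i \<notin> C \<longrightarrow> lam C i = 0) \<and>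
        (\<forall>l\<in>{1..k}. (\<Sum>i\<in>C. lam C i * b l i) = 0) \<and> Gcd (lam C ` C) = 1"
    and good_C: "\<forall>C\<in>circuitsC b k n. \<exists>i\<in>C. (of_int (lam C i) :: 'p mod_ring) \<noteq> 0"
    and good_circuits: "circuitsP TYPE('p) b k n = circuitsC b k n"
    and x_gen: "\<forall>C\<in>circuitsC b k n. fC lam n x C \<noteq> 0"
    and t0_gen: "\<forall>j\<in>{1..n}. fj b k x t0 j \<noteq> 0"
    and bethe: "\<forall>i\<in>{1..k}. (\<Sum>j\<in>{1..n}. of_int (b i j) * of_int (a j) / fj b k x t0 j) = 0"
begin

abbreviation Bp :: "nat \<Rightarrow> nat \<Rightarrow> 'p mod_ring" where "Bp i j \<equiv> of_int (b i j)"
abbreviation Lp :: "nat set \<Rightarrow> nat \<Rightarrow> 'p mod_ring" where "Lp C i \<equiv> of_int (lam C i)"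
abbreviation f :: "nat \<Rightarrow> 'p mod_ring" where "f \<equiv> fj b k x t0"
abbreviation v :: "nat set \<Rightarrow> 'p mod_ring" where "v \<equiv> Fxt b k n x t0"
abbreviation circ :: "nat set set" where "circ \<equiv> circuitsC b k n"
abbreviation basis :: "nat set set" where "basis \<equiv> basis_idx b k n"

lemma circ_P: "circ = {C. is_circuit Bp k {1..n} C}"
  using good_circuits unfolding circuitsP_def by simp

lemma circ_sub: "C \<in> circ \<Longrightarrow> C \<subseteq> {1..n}"
  unfolding circuitsC_def is_circuit_def by simp

lemma circ_finite: "finite circ"
proof -
  have "circ \<subseteq> Pow {1..n}" using circ_sub by blast
  then show ?thesis by (rule finite_subset) simp
qed

lemma indep_iff:
  assumes "S \<subseteq> {1..n}"
  shows "indepC b k S \<longleftrightarrow> lin_indep_forms Bp k S"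
proof -
  have fS: "finite S" using assms finite_subset by blast
  have "indepC b k S \<longleftrightarrow> \<not> (\<exists>C. C \<in> circ \<and> C \<subseteq> S)"
    unfolding indepC_def circuitsC_def using indep_iff_no_circuit[OF fS assms] by simp
  also have "\<dots> \<longleftrightarrow> lin_indep_forms Bp k S"
    unfolding circ_P using indep_iff_no_circuit[OF fS assms, of Bp k] by auto
  finally show ?thesis .
qed

lemma basis_iff: "S \<in> basis \<longleftrightarrow> S \<subseteq> {1..n} \<and> card S = k \<and> lin_indep_forms Bp k S"
  unfolding basis_idx_def using indep_iff by blast

lemma indep_DD:
  assumes "finite S" "card S = k"
  shows "lin_indep_forms Bp k S \<longleftrightarrow> DD Bp k (sorted_list_of_set S) \<noteq> 0"
proof -
  let ?s = "sorted_list_of_set S"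
  have "distinct ?s" "length ?s = k" "set ?s = S" using assms by auto
  then show ?thesis using lif_set_iff[of ?s Bp k] DD_ne0_iff[of ?s k Bp] by simp
qed

lemma dS_DD: "of_int (dS b k S) = DD Bp k (sorted_list_of_set S)"
proof -
  have "map_mat of_int (mat k k (\<lambda>(i, l). b (Suc i) (sorted_list_of_set S ! l)))
      = cm Bp k (sorted_list_of_set S)"
    by (rule eq_matI) (auto simp: cm_def)
  then show ?thesis unfolding dS_def DD_def
    using comm_ring_hom.hom_det[OF of_int_hom.comm_ring_hom_axioms] by metis
qed

lemma v_eq: "v S = (if S \<subseteq> {1..n} \<and> card S = k then DD Bp k (sorted_list_of_set S) / (\<Prod>j\<in>S. f j) else 0)"
proof (cases "S \<subseteq> {1..n} \<and> card S = k")
  case True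
  then have fS: "finite S" using finite_subset by blast
  show ?thesis using True indep_DD[OF fS] basis_iff[of S]
    by (auto simp: Fxt_def dS_DD)
next
  case False
  then show ?thesis by (auto simp: Fxt_def basis_iff)
qed

lemma DD_list_zero:
  assumes "distinct js" "length js = k" "set js \<subseteq> {1..n}" "\<not> lin_indep_forms Bp k (set js)"
  shows "DD Bp k js = 0"
proof -
  have "DD Bp k (sort js) = 0" using assms indep_DD[of "set js"]
    by (simp add: distinct_card sorted_list_of_set_sort_remdups distinct_remdups_id)
  then have "sgn_list js * (sgn_list js * DD Bp k js) = 0" using DD_sort[OF assms(2), of Bp] by simp
  then show ?thesis by (simp only: sgn_cancel)
qed

lemma sgn_v:
  assumes "distinct js" "length js = k" "set js \<subseteq> {1..n}"
  shows "sgn_list js * v (set js) = DD Bp k js / (\<Prod>j\<in>set js. f j)"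
proof -
  have c: "card (set js) = k" using assms by (simp add: distinct_card)
  have s: "sorted_list_of_set (set js) = sort js"
    using assms by (simp add: sorted_list_of_set_sort_remdups distinct_remdups_id)
  have "sgn_list js * DD Bp k (sort js) = sgn_list js * (sgn_list js * DD Bp k js)"
    using DD_sort[OF assms(2), of Bp] by simp
  also have "\<dots> = DD Bp k js" by (rule sgn_cancel)
  finally show ?thesis using v_eq[of "set js"] assms c s by (simp add: times_divide_eq_right)
qed

end

context setting begin

lemma DD_laplace:
  assumes len: "length js = k - 1"
  shows "DD Bp k (j # js) = (\<Sum>r<k. Bp (Suc r) j * cofactor (cm Bp k (0 # js)) r 0)"
proof -
  have M: "cm Bp k (j # js) \<in> carrier_mat k k" by (simp add: cm_def)
  have "DD Bp k (j # js) = (\<Sum>r<k. cm Bp k (j # js) $$ (r, 0) * cofactor (cm Bp k (j # js)) r 0)"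
    unfolding DD_def by (rule laplace_expansion_column[OF M]) (use k_pos in simp)
  also have "\<dots> = (\<Sum>r<k. Bp (Suc r) j * cofactor (cm Bp k (0 # js)) r 0)"
  proof (rule sum.cong[OF refl])
    fix r assume r: "r \<in> {..<k}"
    have "mat_delete (cm Bp k (j # js)) r 0 = mat_delete (cm Bp k (0 # js)) r 0"
      by (rule eq_matI) (auto simp: mat_delete_def cm_def)
    then show "cm Bp k (j # js) $$ (r, 0) * cofactor (cm Bp k (j # js)) r 0
        = Bp (Suc r) j * cofactor (cm Bp k (0 # js)) r 0"
      using r k_pos by (simp add: cofactor_def cm_def)
  qed
  finally show ?thesis .
qed

lemma DD_dup:
  assumes len: "length js = k - 1" and j: "j \<in> set js"
  shows "DD Bp k (j # js) = 0"
proof -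
  obtain u where u: "u < length js" "js ! u = j" using j by (auto simp: in_set_conv_nth)
  have M: "cm Bp k (j # js) \<in> carrier_mat k k" by (simp add: cm_def)
  show ?thesis unfolding DD_def
    by (rule det_identical_columns[OF M, of 0 "Suc u"]) (use u len k_pos in \<open>auto simp: cm_def\<close>)
qed

lemma Icoef_eq:
  assumes len: "length js = k - 1" and sub: "set js \<subseteq> {1..n}" and d: "distinct js"
    and j: "j \<in> {1..n}"
  shows "Icoef b k v (j # js) = DD Bp k (j # js) / (f j * (\<Prod>i\<in>set js. f i))"
proof (cases "j \<in> set js")
  case True
  then show ?thesis using DD_dup[OF len True] by (simp add: Icoef_def)
next
  case False
  have d2: "distinct (j # js)" using d False by simp
  have l2: "length (j # js) = k" using len k_pos by simp
  have s2: "set (j # js) \<subseteq> {1..n}" using sub j by simp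
  have pr: "(\<Prod>i\<in>set (j # js). f i) = f j * (\<Prod>i\<in>set js. f i)" using False by simp
  show ?thesis
  proof (cases "indepC b k (set (j # js))")
    case True
    then show ?thesis using sgn_v[OF d2 l2 s2] pr d2 by (simp add: Icoef_def)
  next
    case False
    then have "\<not> lin_indep_forms Bp k (set (j # js))" using indep_iff[OF s2] by simp
    then show ?thesis using DD_list_zero[OF d2 l2 s2] False by (simp add: Icoef_def)
  qed
qed

lemma singular: "singular_vec a b k n v"
  unfolding singular_vec_def
proof (intro allI impI)
  fix js :: "nat list" assume h: "length js = k - 1 \<and> set js \<subseteq> {1..n}"
  then have len: "length js = k - 1" and sub: "set js \<subseteq> {1..n}" by auto
  show "(\<Sum>j\<in>{1..n}. of_int (a j) * Icoef b k v (j # js)) = 0"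
  proof (cases "distinct js")
    case False
    then show ?thesis by (simp add: Icoef_def)
  next
    case True
    define P where "P = (\<Prod>i\<in>set js. f i)"
    define cof where "cof r = cofactor (cm Bp k (0 # js)) r 0" for r
    have "(\<Sum>j\<in>{1..n}. of_int (a j) * Icoef b k v (j # js))
        = (\<Sum>j\<in>{1..n}. (\<Sum>r<k. (cof r / P) * (Bp (Suc r) j * of_int (a j) / f j)))"
    proof (rule sum.cong[OF refl])
      fix j assume j: "j \<in> {1..n}"
      have "of_int (a j) * Icoef b k v (j # js) = of_int (a j) * ((\<Sum>r<k. Bp (Suc r) j * cof r) / (f j * P))"
        using Icoef_eq[OF len sub True j] DD_laplace[OF len, of j] by (simp add: P_def cof_def)
      also have "\<dots> = (\<Sum>r<k. (cof r / P) * (Bp (Suc r) j * of_int (a j) / f j))"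
        by (simp add: sum_divide_distrib sum_distrib_left algebra_simps)
      finally show "of_int (a j) * Icoef b k v (j # js) = (\<Sum>r<k. (cof r / P) * (Bp (Suc r) j * of_int (a j) / f j))" .
    qed
    also have "\<dots> = (\<Sum>r<k. \<Sum>j\<in>{1..n}. (cof r / P) * (Bp (Suc r) j * of_int (a j) / f j))"
      by (rule sum.swap)
    also have "\<dots> = (\<Sum>r<k. (cof r / P) * (\<Sum>j\<in>{1..n}. Bp (Suc r) j * of_int (a j) / f j))"
      by (simp only: sum_distrib_left)
    also have "\<dots> = 0" using bethe by simp
    finally show ?thesis .
  qed
qed

end

context setting begin

lemma circ_is: "C \<in> circ \<Longrightarrow> is_circuit Bp k {1..n} C"
  by (simp add: circ_P)

lemma circ_fin: "C \<in> circ \<Longrightarrow> finite C"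
  by (rule finite_subset[OF circ_sub]) simp_all

lemma circ_rel: "C \<in> circ \<Longrightarrow> rel Bp k (Lp C) C"
proof -
  assume C: "C \<in> circ"
  have "(\<Sum>i\<in>C. lam C i * b l i) = 0" if "l \<in> {1..k}" for l
    using bspec[OF lam_circ C, THEN conjunct2, THEN conjunct2, THEN conjunct1] that by blast
  moreover have "of_int (\<Sum>i\<in>C. lam C i * b l i) = (\<Sum>i\<in>C. Lp C i * Bp l i)" for l by simp
  ultimately show ?thesis unfolding rel_def by (metis of_int_0)
qed

lemma circ_out: "C \<in> circ \<Longrightarrow> i \<notin> C \<Longrightarrow> Lp C i = 0"
  using bspec[OF lam_circ, of C, THEN conjunct2, THEN conjunct1] by simp

lemma circ_nz:
  assumes C: "C \<in> circ" and i: "i \<in> C"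
  shows "Lp C i \<noteq> 0"
proof -
  note h = circuit_support[OF circ_is[OF C] circ_fin[OF C] circ_rel[OF C]]
  have "\<exists>j\<in>C. Lp C j \<noteq> 0" using bspec[OF good_C C] .
  then have "\<forall>j\<in>C. Lp C j \<noteq> 0" by (rule h)
  then show ?thesis using i by (rule bspec)
qed

lemma fC_eq:
  assumes C: "C \<in> circ"
  shows "fC lam n x C = (\<Sum>c\<in>C. Lp C c * f c)"
proof -
  have "fC lam n x C = (\<Sum>c\<in>C. Lp C c * x c)"
    unfolding fC_def
    by (rule sum.mono_neutral_right) (use circ_sub[OF C] circ_out[OF C] in auto)
  moreover have "(\<Sum>c\<in>C. Lp C c * f c) = (\<Sum>c\<in>C. Lp C c * x c) + (\<Sum>r=1..k. t0 r * (\<Sum>c\<in>C. Lp C c * Bp r c))"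
  proof -
    have "(\<Sum>c\<in>C. Lp C c * f c) = (\<Sum>c\<in>C. Lp C c * x c) + (\<Sum>c\<in>C. \<Sum>r=1..k. t0 r * (Lp C c * Bp r c))"
      unfolding fj_def by (simp only: distrib_left sum.distrib sum_distrib_left mult.commute mult.left_commute)
    also have "(\<Sum>c\<in>C. \<Sum>r=1..k. t0 r * (Lp C c * Bp r c)) = (\<Sum>r=1..k. \<Sum>c\<in>C. t0 r * (Lp C c * Bp r c))"
      by (rule sum.swap)
    finally show ?thesis by (simp only: sum_distrib_left)
  qed
  moreover have "(\<Sum>c\<in>C. Lp C c * Bp r c) = 0" if "r \<in> {1..k}" for r
    using circ_rel[OF C] that unfolding rel_def by blast
  ultimately show ?thesis by simp
qed

definition LFm :: "nat set \<Rightarrow> nat set \<Rightarrow> nat" where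
  "LFm C S = (THE m. m \<in> {1..card C} \<and> S \<inter> C = C - {sorted_list_of_set C ! (m - 1)})"

definition LFsum :: "nat set \<Rightarrow> nat set \<Rightarrow> nat set \<Rightarrow> 'p mod_ring" where
  "LFsum C S T = (\<Sum>l=1..card C. (-1) ^ l * of_int (a (sorted_list_of_set C ! (l - 1))) *
      Fvec b k (del_nth l (sorted_list_of_set C) @ sorted_list_of_set (S - C)) T)"

lemma LF_unfold:
  assumes "card (S \<inter> C) = card C - 1" "\<not> C \<subseteq> S"
  shows "LF a b k C S T = sgn_list (del_nth (LFm C S) (sorted_list_of_set C) @ sorted_list_of_set (S - C))
     * (-1) ^ (LFm C S) * LFsum C S T"
  unfolding LF_def Let_def LFm_def LFsum_def using assms by (simp only: if_True conj_absorb simp_thms)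

lemma LF_cond:
  assumes "LF a b k C S T \<noteq> (0::'p mod_ring)"
  shows "card (S \<inter> C) = card C - 1" "\<not> C \<subseteq> S"
proof -
  have "card (S \<inter> C) = card C - 1 \<and> \<not> C \<subseteq> S"
  proof (rule ccontr)
    assume "\<not> (card (S \<inter> C) = card C - 1 \<and> \<not> C \<subseteq> S)"
    then have "LF a b k C S T = (0::'p mod_ring)" unfolding LF_def by (simp only: if_False)
    then show False using assms by simp
  qed
  then show "card (S \<inter> C) = card C - 1" "\<not> C \<subseteq> S" by auto
qed

lemma LF_struct:
  assumes C: "C \<in> circ" and S: "S \<in> basis" and nz: "LF a b k C S T \<noteq> (0::'p mod_ring)"
  shows "T \<in> basis \<and> (\<exists>j. C - T = {j}) \<and> S - C = T - C"
proof -
  define cl where "cl = sorted_list_of_set C"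
  define sl where "sl = sorted_list_of_set (S - C)"
  have fC: "finite C" using circ_fin[OF C] .
  have Ssub: "S \<subseteq> {1..n}" "card S = k" using S basis_iff by auto
  have fS: "finite S" using Ssub finite_subset by blast
  have cl: "distinct cl" "set cl = C" "length cl = card C" using fC by (auto simp: cl_def)
  have sl: "distinct sl" "set sl = S - C" "length sl = card (S - C)" using fS by (auto simp: sl_def)
  have cond: "card (S \<inter> C) = card C - 1" "\<not> C \<subseteq> S" using LF_cond[OF nz] by auto
  have "LFsum C S T \<noteq> 0" using nz LF_unfold[OF cond, of T] by auto
  then obtain l where l: "l \<in> {1..card C}"
    and "(-1) ^ l * of_int (a (cl ! (l - 1))) * Fvec b k (del_nth l cl @ sl) T \<noteq> (0::'p mod_ring)"
    unfolding LFsum_def cl_def[symmetric] sl_def[symmetric]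
    by (blast dest: sum.not_neutral_contains_not_neutral)
  then have Fl: "Fvec b k (del_nth l cl @ sl) T \<noteq> (0::'p mod_ring)" by auto
  have dl: "set (del_nth l cl) = C - {cl ! (l - 1)}" "distinct (del_nth l cl)"
    using del_nth_set[OF cl(1), of l] l cl by auto
  have ll: "length (del_nth l cl) = card C - 1" using l cl by (simp add: length_del_nth)
  have T: "T = set (del_nth l cl @ sl)" "distinct (del_nth l cl @ sl)" "indepC b k T"
    using Fl unfolding Fvec_def by (auto split: if_splits)
  have Teq: "T = (C - {cl ! (l - 1)}) \<union> (S - C)" using T(1) dl sl by simp
  have jC: "cl ! (l - 1) \<in> C" using l cl by (auto intro!: nth_mem)
  have cSC1: "card (S - C) = card S - card (S \<inter> C)" by (rule card_Diff_subset_Int) (use fS in simp)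
  have cSC2: "card (S \<inter> C) \<le> card S" by (rule card_mono) (use fS in auto)
  have "C \<noteq> {}" using cond(2) by auto
  then have "card C \<ge> 1" using fC by (simp add: Suc_le_eq card_gt_0_iff)
  then have "length (del_nth l cl @ sl) = k" using ll sl(3) cSC1 cSC2 cond(1) Ssub(2) by simp
  moreover have "card T = length (del_nth l cl @ sl)" using distinct_card[OF T(2)] T(1) by simp
  ultimately have "card T = k" by simp
  moreover have "T \<subseteq> {1..n}" using Teq circ_sub[OF C] Ssub(1) by auto
  ultimately have "T \<in> basis" using T(3) unfolding basis_idx_def by blast
  moreover have "C - T = {cl ! (l - 1)}" using Teq jC by auto
  moreover have "S - C = T - C" using Teq by auto
  ultimately show ?thesis by blast
qed

lemma Lop_zero:
  assumes C: "C \<in> circ" and nT: "\<not> (T \<in> basis \<and> (\<exists>j. C - T = {j}))"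
  shows "Lop a b k n C v T = 0"
  unfolding Lop_def
proof (rule sum.neutral, rule ballI)
  fix S assume S: "S \<in> basis"
  show "v S * LF a b k C S T = 0"
    using LF_struct[OF C S] nT by (cases "LF a b k C S T = (0::'p mod_ring)") auto
qed

end

lemma diff_single_eq: assumes "a \<in> C" "b \<in> C" "C - {a} = C - {b}" shows "a = b"
proof (rule ccontr)
  assume "a \<noteq> b"
  then have "a \<in> C - {b}" using assms(1) by simp
  then have "a \<in> C - {a}" using assms(3) by simp
  then show False by simp
qed

context setting begin

lemma Lop_val:
  assumes C: "C \<in> circ" and T: "T \<in> basis" and j: "C - T = {j}"
  shows "Lop a b k n C v T = fC lam n x C * (of_int (a j) / (Lp C j * f j)) * v T"
proof -
  define cl where "cl = sorted_list_of_set C"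
  define r where "r = card C"
  define s where "s = T - C"
  define sl where "sl = sorted_list_of_set s"
  define L where "L q = del_nth (Suc q) cl @ sl" for q
  define FL where "FL = cl @ sl"
  have fC: "finite C" using circ_fin[OF C] .
  have CJ: "C \<subseteq> {1..n}" using circ_sub[OF C] .
  have Tb: "T \<subseteq> {1..n}" "card T = k" "lin_indep_forms Bp k T" using T basis_iff by auto
  have fT: "finite T" using Tb(1) finite_subset by blast
  have cl: "distinct cl" "set cl = C" "length cl = r" using fC by (auto simp: cl_def r_def)
  have fs: "finite s" using fT by (simp add: s_def)
  have sl: "distinct sl" "set sl = s" "length sl = card s" using fs by (auto simp: sl_def)
  have jC: "j \<in> C" "j \<notin> T" using j by auto
  have TC: "T \<inter> C = C - {j}" using j by auto
  have Teq: "T = (C - {j}) \<union> s" using j by (auto simp: s_def)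
  have sC: "s \<inter> C = {}" by (auto simp: s_def)
  have sJ: "s \<subseteq> {1..n}" using Tb(1) by (auto simp: s_def)
  obtain q0 where q0: "q0 < r" "cl ! q0 = j" using jC(1) cl by (metis in_set_conv_nth)
  have "C \<noteq> {}" using jC(1) by auto
  then have r1: "r \<ge> 1" using fC by (simp add: r_def Suc_le_eq card_gt_0_iff)
  have cTC: "card (T \<inter> C) = r - 1" using TC fC jC(1) by (simp add: r_def)
  have cs: "card s = card T - card (T \<inter> C)" unfolding s_def by (rule card_Diff_subset_Int) (use fT in simp)
  have cTC2: "card (T \<inter> C) \<le> card T" by (rule card_mono) (use fT in auto)
  have rk: "r - 1 + card s = k" using cs cTC cTC2 Tb(2) by simp
  have Lset: "set (L q) = (C - {cl ! q}) \<union> s" "distinct (L q)" "length (L q) = k" if "q < r" for q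
  proof -
    have dn: "set (del_nth (Suc q) cl) = C - {cl ! q}" "distinct (del_nth (Suc q) cl)"
      using del_nth_set[OF cl(1), of "Suc q"] that cl by auto
    show "set (L q) = (C - {cl ! q}) \<union> s" using dn sl by (simp add: L_def)
    show "distinct (L q)" using dn sl sC by (auto simp: L_def)
    show "length (L q) = k" using that cl sl rk by (simp add: L_def length_del_nth)
  qed
  have Lsub: "set (L q) \<subseteq> {1..n}" if "q < r" for q using Lset(1)[OF that] CJ sJ by auto
  have LT: "set (L q0) = T" using Lset(1)[OF q0(1)] q0(2) Teq by simp
  have clq: "cl ! q \<in> C" if "q < r" for q using that cl by (auto intro: nth_mem)
  have clinj: "cl ! q = cl ! q' \<longleftrightarrow> q = q'" if "q < r" "q' < r" for q q'
    using that cl by (simp add: nth_eq_iff_index_eq)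
  define Sm where "Sm q = set (L q)" for q
  define g where "g S = v S * LF a b k C S T" for S
  define G where "G S = (if S \<in> basis then g S else 0)" for S
  have loc: "S \<in> Sm ` {..<r}" if S: "S \<in> basis" and nz: "g S \<noteq> 0" for S
  proof -
    have LFnz: "LF a b k C S T \<noteq> (0::'p mod_ring)" using nz by (auto simp: g_def)
    have st: "S - C = T - C" using LF_struct[OF C S LFnz] by blast
    have cond: "card (S \<inter> C) = card C - 1" "\<not> C \<subseteq> S" using LF_cond[OF LFnz] by auto
    have c1: "card (C - S) = 1"
    proof -
      have "card (C - S) = card C - card (C \<inter> S)" by (rule card_Diff_subset_Int) (use fC in simp)
      then show ?thesis using cond(1) r1 by (simp add: Int_commute r_def)
    qed
    then obtain c where c: "C - S = {c}" by (auto simp: card_Suc_eq)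
    then have "c \<in> C" by auto
    then obtain q where q: "q < r" "cl ! q = c" using cl by (metis in_set_conv_nth)
    have "S = (C - {c}) \<union> s"
    proof -
      have "S = (S \<inter> C) \<union> (S - C)" by auto
      also have "S \<inter> C = C - {c}" using c by auto
      finally show ?thesis using st by (simp add: s_def)
    qed
    then have "S = Sm q" using Lset(1)[OF q(1)] q(2) by (simp add: Sm_def)
    then show ?thesis using q(1) by auto
  qed
  have fb: "finite basis"
  proof -
    have "basis \<subseteq> Pow {1..n}"
    proof
      fix S assume "S \<in> basis" then show "S \<in> Pow {1..n}" using basis_iff by simp
    qed
    then show ?thesis by (rule finite_subset) simp
  qed
  have inj: "inj_on Sm {..<r}"
  proof (rule inj_onI)
    fix q q' assume q: "q \<in> {..<r}" "q' \<in> {..<r}" "Sm q = Sm q'"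
    then have "Sm q \<inter> C = Sm q' \<inter> C" by simp
    then have "C - {cl ! q} = C - {cl ! q'}" using Lset(1) q(1,2) sC by (auto simp: Sm_def)
    then have "cl ! q = cl ! q'" using clq q(1,2) by auto
    then show "q = q'" using clinj q(1,2) by auto
  qed
  have step1: "Lop a b k n C v T = (\<Sum>q<r. G (Sm q))"
  proof -
    have "Lop a b k n C v T = (\<Sum>S\<in>basis. g S)" by (simp add: Lop_def g_def)
    also have "\<dots> = (\<Sum>S\<in>basis \<inter> Sm ` {..<r}. g S)"
      by (rule sum.mono_neutral_right) (use fb loc in auto)
    also have "\<dots> = (\<Sum>S\<in>Sm ` {..<r}. G S)"
      by (rule sum.mono_neutral_cong_left) (auto simp: G_def)
    also have "\<dots> = (\<Sum>q<r. G (Sm q))" by (rule sum.reindex_cong[OF inj refl]) simp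
    finally show ?thesis .
  qed
  define R where "R = (-1) ^ Suc q0 * of_int (a j) * (sgn_list (L q0) :: 'p mod_ring)"
  have SmC: "Sm q \<inter> C = C - {cl ! q}" "Sm q - C = s" "cl ! q \<notin> Sm q" if "q < r" for q
    using Lset(1)[OF that] sC clq[OF that] by (auto simp: Sm_def)
  have LFm_eq: "LFm C (Sm q) = Suc q" if q: "q < r" for q
    unfolding LFm_def cl_def[symmetric] r_def[symmetric]
  proof (rule the_equality)
    show "Suc q \<in> {1..r} \<and> Sm q \<inter> C = C - {cl ! (Suc q - 1)}" using q SmC(1)[OF q] by simp
  next
    fix m assume m: "m \<in> {1..r} \<and> Sm q \<inter> C = C - {cl ! (m - 1)}"
    have "C - {cl ! q} = Sm q \<inter> C" by (rule SmC(1)[OF q, symmetric])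
    also have "\<dots> = C - {cl ! (m - 1)}" using m by (rule conjunct2)
    finally have eqC: "C - {cl ! q} = C - {cl ! (m - 1)}" .
    have m1: "m \<in> {1..r}" using m by (rule conjunct1)
    then have "m - 1 < r" by auto
    then have "cl ! q = cl ! (m - 1)" using diff_single_eq[OF clq[OF q] clq[of "m - 1"]] eqC by simp
    then have "q = m - 1" using clinj[OF q \<open>m - 1 < r\<close>] by simp
    moreover have "m \<ge> 1" using m1 by simp
    ultimately show "m = Suc q" by simp
  qed
  have Fv: "Fvec b k (L q) T = (if q = q0 then sgn_list (L q0) else (0::'p mod_ring))" if q: "q < r" for q
  proof (cases "q = q0")
    case True
    have "indepC b k T" using T unfolding basis_idx_def by simp
    then show ?thesis using True LT Lset(2)[OF q] by (simp add: Fvec_def)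
  next
    case False
    have "j \<in> set (L q)" using Lset(1)[OF q] jC(1) q0(2) clinj[OF q q0(1)] False by auto
    then have "T \<noteq> set (L q)" using jC(2) by auto
    then show ?thesis using False by (simp add: Fvec_def)
  qed
  have LFsum_eq: "LFsum C (Sm q) T = R" if q: "q < r" for q
  proof -
    have "LFsum C (Sm q) T = (\<Sum>l=1..r. (-1) ^ l * of_int (a (cl ! (l - 1))) * Fvec b k (L (l - 1)) T)"
      unfolding LFsum_def cl_def[symmetric] r_def[symmetric] SmC(2)[OF q] sl_def[symmetric]
      by (rule sum.cong) (auto simp: L_def)
    also have "\<dots> = (\<Sum>l\<in>{Suc q0}. (-1) ^ l * of_int (a (cl ! (l - 1))) * Fvec b k (L (l - 1)) T)"
    proof (rule sum.mono_neutral_right)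
      show "finite {1..r}" by simp
      show "{Suc q0} \<subseteq> {1..r}" using q0(1) by simp
      show "\<forall>l\<in>{1..r} - {Suc q0}. (-1) ^ l * of_int (a (cl ! (l - 1))) * Fvec b k (L (l - 1)) T = (0::'p mod_ring)"
      proof
        fix l assume l: "l \<in> {1..r} - {Suc q0}"
        then have "l - 1 < r" "l - 1 \<noteq> q0" by auto
        then show "(-1) ^ l * of_int (a (cl ! (l - 1))) * Fvec b k (L (l - 1)) T = (0::'p mod_ring)"
          using Fv[of "l - 1"] by simp
      qed
    qed
    also have "\<dots> = R" using Fv[OF q0(1)] q0 by (simp add: R_def)
    finally show ?thesis .
  qed
  have LF_eq: "LF a b k C (Sm q) T = sgn_list (L q) * (-1) ^ Suc q * R" if q: "q < r" for q
  proof -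
    have c1: "card (Sm q \<inter> C) = card C - 1" using SmC(1)[OF q] clq[OF q] fC by simp
    have c2: "\<not> C \<subseteq> Sm q" using SmC(3)[OF q] clq[OF q] by blast
    show ?thesis using LF_unfold[OF c1 c2, of T] LFm_eq[OF q] LFsum_eq[OF q] SmC(2)[OF q]
      by (simp add: cl_def[symmetric] sl_def[symmetric] L_def)
  qed
  have G_eq: "G (Sm q) = DD Bp k (L q) / (\<Prod>i\<in>Sm q. f i) * ((-1) ^ Suc q * R)" if q: "q < r" for q
  proof (cases "Sm q \<in> basis")
    case True
    have "G (Sm q) = (sgn_list (L q) * v (set (L q))) * ((-1) ^ Suc q * R)"
      using True LF_eq[OF q] by (simp add: G_def g_def Sm_def mult_ac)
    also have "sgn_list (L q) * v (set (L q)) = DD Bp k (L q) / (\<Prod>i\<in>Sm q. f i)"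
      using sgn_v[OF Lset(2,3)[OF q] Lsub[OF q]] by (simp add: Sm_def)
    finally show ?thesis .
  next
    case False
    have "card (Sm q) = k" using distinct_card[OF Lset(2)[OF q]] Lset(3)[OF q] by (simp add: Sm_def)
    then have "\<not> lin_indep_forms Bp k (set (L q))" using False basis_iff Lsub[OF q] by (simp add: Sm_def)
    then have "DD Bp k (L q) = 0" using DD_list_zero[OF Lset(2,3)[OF q] Lsub[OF q]] by simp
    then show ?thesis using False by (simp add: G_def)
  qed
  have rSk: "r \<le> Suc k" using rk r1 by simp
  have FLp: "distinct FL" "length FL = Suc k" "set FL = C \<union> s"
    using cl sl sC rk r1 by (auto simp: FL_def)
  have FLn: "FL ! q = cl ! q" if "q < r" for q using that cl by (simp add: FL_def nth_append)
  have dFL: "del_nth (Suc q) FL = L q" if "q < r" for q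
    using that cl by (simp add: FL_def L_def del_nth_append)
  define \<mu> where "\<mu> q = Lp C (FL ! q)" for q
  have mu: "\<forall>i\<in>{1..k}. (\<Sum>q<Suc k. \<mu> q * Bp i (FL ! q)) = 0"
  proof
    fix i assume i: "i \<in> {1..k}"
    have "(\<Sum>q<Suc k. \<mu> q * Bp i (FL ! q)) = (\<Sum>c\<in>set FL. Lp C c * Bp i c)"
      using sum_set_nth[OF FLp(1), of "\<lambda>c. Lp C c * Bp i c"] FLp(2) by (simp add: \<mu>_def)
    also have "\<dots> = (\<Sum>c\<in>C. Lp C c * Bp i c)"
    proof (rule sum.mono_neutral_right)
      show "finite (set FL)" by simp
      show "C \<subseteq> set FL" using FLp(3) by simp
      show "\<forall>c\<in>set FL - C. Lp C c * Bp i c = 0" using circ_out[OF C] by simp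
    qed
    also have "\<dots> = 0" using circ_rel[OF C] i unfolding rel_def by blast
    finally show "(\<Sum>q<Suc k. \<mu> q * Bp i (FL ! q)) = 0" .
  qed
  define E where "E q = (-1) ^ q * DD Bp k (del_nth (Suc q) FL)" for q
  have DT: "sgn_list (L q0) * DD Bp k (L q0) = DD Bp k (sorted_list_of_set T)"
  proof -
    have "sorted_list_of_set T = sort (L q0)"
      using LT Lset(2)[OF q0(1)] by (metis sorted_list_of_set_sort_remdups distinct_remdups_id)
    then show ?thesis using DD_sort[OF Lset(3)[OF q0(1)], of Bp] by simp
  qed
  have DTnz: "DD Bp k (sorted_list_of_set T) \<noteq> 0" using indep_DD[OF fT Tb(2)] Tb(3) by simp
  have nzE: "DD Bp k (del_nth (Suc q0) FL) \<noteq> 0"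
    using DT DTnz dFL[OF q0(1)] by auto
  have rs: "Lp C (cl ! q) * E q0 = Lp C j * E q" if q: "q < r" for q
  proof -
    have "\<mu> q * E q0 = \<mu> q0 * E q"
      by (rule rel_span[OF FLp(2) _ nzE mu]) (use q q0 rSk in \<open>auto simp: E_def\<close>)
    then show ?thesis using FLn[OF q] FLn[OF q0(1)] q0(2) by (simp add: \<mu>_def)
  qed
  have Lpj: "Lp C j \<noteq> 0" using circ_nz[OF C jC(1)] .
  have fnz: "f i \<noteq> 0" if "i \<in> {1..n}" for i using t0_gen that by blast
  define P where "P = (\<Prod>i\<in>insert j T. f i)"
  define K where "K = - E q0 * R / (Lp C j * P)"
  have insT: "insert j T = C \<union> s" using Teq jC(1) by auto
  have tq: "G (Sm q) = (Lp C (cl ! q) * f (cl ! q)) * K" if q: "q < r" for q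
  proof -
    define PS where "PS = (\<Prod>i\<in>Sm q. f i)"
    define fc where "fc = f (cl ! q)"
    define D where "D = DD Bp k (L q)"
    have fSm: "finite (Sm q)" by (simp add: Sm_def)
    have "insert (cl ! q) (Sm q) = C \<union> s" using SmC[OF q] clq[OF q] sC by (auto simp: Sm_def Lset(1)[OF q])
    then have PP: "P = fc * PS" unfolding P_def PS_def fc_def insT[symmetric]
      using prod.insert[OF fSm SmC(3)[OF q]] by simp
    have PSnz: "PS \<noteq> 0" unfolding PS_def using fSm Lsub[OF q] fnz by (auto simp: Sm_def prod_zero_iff)
    have fcnz: "fc \<noteq> 0" unfolding fc_def using clq[OF q] CJ fnz by auto
    have Eq: "E q = (-1) ^ q * D" by (simp add: E_def D_def dFL[OF q])
    have G1: "G (Sm q) = D / PS * ((-1) ^ Suc q * R)" using G_eq[OF q] by (simp add: D_def PS_def)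
    have "(Lp C (cl ! q) * fc) * K = - (Lp C (cl ! q) * E q0) * R * fc / (Lp C j * P)"
      by (simp add: K_def)
    also have "\<dots> = - (Lp C j * E q) * R * fc / (Lp C j * (fc * PS))" using rs[OF q] PP by simp
    also have "\<dots> = - E q * R / PS" using Lpj fcnz PSnz by (simp add: field_simps)
    also have "\<dots> = D / PS * ((-1) ^ Suc q * R)" using Eq by (simp add: field_simps)
    finally show ?thesis using G1 by (simp add: fc_def)
  qed
  have "Lop a b k n C v T = (\<Sum>q<r. (Lp C (cl ! q) * f (cl ! q)) * K)"
    using step1 tq by simp
  also have "\<dots> = (\<Sum>c\<in>C. Lp C c * f c) * K"
    using sum_set_nth[OF cl(1), of "\<lambda>c. Lp C c * f c"] cl by (simp add: sum_distrib_right)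
  also have "(\<Sum>c\<in>C. Lp C c * f c) = fC lam n x C" using fC_eq[OF C] by simp
  also have "K = of_int (a j) / (Lp C j * f j) * v T"
  proof -
    have fT: "finite T" using fT .
    have P2: "P = f j * (\<Prod>i\<in>T. f i)" unfolding P_def using prod.insert[OF fT jC(2)] by simp
    have vT: "v T = DD Bp k (sorted_list_of_set T) / (\<Prod>i\<in>T. f i)" using v_eq[of T] Tb by simp
    have E0: "E q0 = (-1) ^ q0 * DD Bp k (L q0)" by (simp add: E_def dFL[OF q0(1)])
    have "- E q0 * R = of_int (a j) * (sgn_list (L q0) * DD Bp k (L q0))"
      by (simp add: E0 R_def power_mult_distrib[symmetric] mult_ac)
    also have "\<dots> = of_int (a j) * DD Bp k (sorted_list_of_set T)" using DT by simp
    finally have "- E q0 * R = of_int (a j) * DD Bp k (sorted_list_of_set T)" .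
    then show ?thesis unfolding K_def P2 vT by (simp add: field_simps)
  qed
  finally show ?thesis by (simp add: mult_ac)
qed

end

context setting begin

lemma fund_ex:
  assumes T: "T \<in> basis" and j: "j \<in> {1..n}" "j \<notin> T"
  shows "\<exists>C. C \<in> circ \<and> C - T = {j}"
proof -
  have Tb: "T \<subseteq> {1..n}" "card T = k" "lin_indep_forms Bp k T" using T basis_iff by auto
  have fT: "finite T" using Tb(1) finite_subset by blast
  have "\<not> lin_indep_forms Bp k (insert j T)" by (rule insert_dep[OF fT Tb(2,3) j(2)])
  moreover have "insert j T \<subseteq> {1..n}" using Tb(1) j(1) by simp
  ultimately obtain C where C: "is_circuit Bp k {1..n} C" "C \<subseteq> insert j T"
    using dep_has_circuit[of "insert j T" "{1..n}" Bp k] fT by auto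
  have "j \<in> C"
  proof (rule ccontr)
    assume "j \<notin> C"
    then have "C \<subseteq> T" using C(2) by auto
    then have "lin_indep_forms Bp k C" by (rule indep_subset[OF fT Tb(3)])
    then show False using C(1) unfolding is_circuit_def by simp
  qed
  then have "C - T = {j}" using C(2) j(2) by auto
  moreover have "C \<in> circ" using C(1) circ_P by simp
  ultimately show ?thesis by blast
qed

lemma fund_uniq:
  assumes T: "T \<in> basis" and C1: "C1 \<in> circ" "C1 - T = {j}" and C2: "C2 \<in> circ" "C2 - T = {j}"
  shows "C1 = C2"
proof -
  have Tb: "T \<subseteq> {1..n}" "card T = k" "lin_indep_forms Bp k T" using T basis_iff by auto
  have fT: "finite T" using Tb(1) finite_subset by blast
  show ?thesis
    by (rule circuit_unique[OF fT Tb(3), of j "{1..n}" C1 C2])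
       (use C1 C2 circ_is in auto)
qed

lemma Kop_val:
  assumes i: "i \<in> {1..n}"
  shows "Kop a b lam k n x i v T = of_int (a i) / f i * v T"
proof (cases "T \<in> basis")
  case False
  have "Kop a b lam k n x i v T = 0"
    unfolding Kop_def using Lop_zero False by simp
  moreover have "v T = 0" using False by (simp add: Fxt_def)
  ultimately show ?thesis by simp
next
  case T: True
  have Tb: "T \<subseteq> {1..n}" "card T = k" "lin_indep_forms Bp k T" using T basis_iff by auto
  have fT: "finite T" using Tb(1) finite_subset by blast
  define FC where "FC j = (THE C. C \<in> circ \<and> C - T = {j})" for j
  have FC: "FC j \<in> circ" "FC j - T = {j}" if j: "j \<in> {1..n} - T" for j
  proof -
    obtain C where C: "C \<in> circ" "C - T = {j}" using fund_ex[OF T] j by blast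
    have "FC j = C" unfolding FC_def
      by (rule the_equality) (use C fund_uniq[OF T] in blast)+
    then show "FC j \<in> circ" "FC j - T = {j}" using C by auto
  qed
  define w where "w q = of_int (a q) / f q" for q
  define \<rho> where "\<rho> j m = Lp (FC j) m / Lp (FC j) j" for j m
  define h where "h C = Lp C i / fC lam n x C * Lop a b k n C v T" for C
  have hC: "h C = Lp C i * (of_int (a j) / (Lp C j * f j)) * v T" if C: "C \<in> circ" "C - T = {j}" for C j
  proof -
    have "fC lam n x C \<noteq> 0" using x_gen C(1) by blast
    then show ?thesis unfolding h_def Lop_val[OF C(1) T C(2)] by (simp add: field_simps)
  qed
  have inj: "inj_on FC ({1..n} - T)"
  proof (rule inj_onI)
    fix j j' assume "j \<in> {1..n} - T" "j' \<in> {1..n} - T" "FC j = FC j'"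
    then show "j = j'" using FC by (metis singleton_inject)
  qed
  have "Kop a b lam k n x i v T = (\<Sum>C\<in>circ. h C)" by (simp add: Kop_def h_def)
  also have "\<dots> = (\<Sum>C\<in>FC ` ({1..n} - T). h C)"
  proof (rule sum.mono_neutral_right)
    show "finite circ" by (rule circ_finite)
    show "FC ` ({1..n} - T) \<subseteq> circ" using FC by auto
    show "\<forall>C\<in>circ - FC ` ({1..n} - T). h C = 0"
    proof
      fix C assume C: "C \<in> circ - FC ` ({1..n} - T)"
      have "\<not> (\<exists>j. C - T = {j})"
      proof
        assume "\<exists>j. C - T = {j}"
        then obtain j where j: "C - T = {j}" by blast
        have "j \<in> C" "j \<notin> T" using j by auto
        moreover have "C \<subseteq> {1..n}" using circ_sub C by simp
        ultimately have jJ: "j \<in> {1..n} - T" by auto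
        then have "FC j = C" using fund_uniq[OF T _ _ _ j] FC[OF jJ] C by auto
        then show False using C jJ by auto
      qed
      then show "h C = 0" unfolding h_def using Lop_zero C by simp
    qed
  qed
  also have "\<dots> = (\<Sum>j\<in>{1..n} - T. h (FC j))" by (rule sum.reindex[OF inj, unfolded comp_def])
  also have "\<dots> = (\<Sum>j\<in>{1..n} - T. \<rho> j i * w j) * v T"
    unfolding sum_distrib_right
  proof (rule sum.cong[OF refl])
    fix j assume j: "j \<in> {1..n} - T"
    show "h (FC j) = \<rho> j i * w j * v T" using hC[OF FC[OF j]] by (simp add: \<rho>_def w_def field_simps)
  qed
  also have "(\<Sum>j\<in>{1..n} - T. \<rho> j i * w j) = w i"
  proof (cases "i \<in> T")
    case False
    have z: "\<rho> j i = 0" if "j \<in> {1..n} - T" "j \<noteq> i" for j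
    proof -
      have "i \<notin> FC j" using FC[OF that(1)] that(2) False by auto
      then show ?thesis using circ_out FC[OF that(1)] by (simp add: \<rho>_def)
    qed
    have iJ: "i \<in> {1..n} - T" using i False by simp
    have "i \<in> FC i" using FC(2)[OF iJ] by blast
    then have "Lp (FC i) i \<noteq> 0" by (rule circ_nz[OF FC(1)[OF iJ]])
    then have "\<rho> i i = 1" by (simp add: \<rho>_def)
    then show ?thesis using z iJ by (simp add: sum.remove[of _ i] sum.neutral)
  next
    case True
    define c where "c m = w m - (\<Sum>j\<in>{1..n} - T. w j * \<rho> j m)" for m
    have rowB: "Bp r j = - (\<Sum>m\<in>T. \<rho> j m * Bp r m)" if j: "j \<in> {1..n} - T" and r: "r \<in> {1..k}" for j r
    proof -
      have C: "FC j \<in> circ" "FC j - T = {j}" using FC[OF j] by auto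
      define X where "X = (\<Sum>m\<in>T. Lp (FC j) m * Bp r m)"
      have "(\<Sum>c\<in>FC j. Lp (FC j) c * Bp r c) = 0" using circ_rel[OF C(1)] r unfolding rel_def by blast
      moreover have "(\<Sum>c\<in>FC j. Lp (FC j) c * Bp r c) = (\<Sum>c\<in>insert j T. Lp (FC j) c * Bp r c)"
        by (rule sum.mono_neutral_left) (use fT C circ_out[OF C(1)] in auto)
      moreover have "(\<Sum>c\<in>insert j T. Lp (FC j) c * Bp r c) = Lp (FC j) j * Bp r j + X"
        using fT j by (simp add: X_def)
      ultimately have s0: "Lp (FC j) j * Bp r j = - X" by (simp add: eq_neg_iff_add_eq_0)
      have "j \<in> FC j" using C(2) by blast
      then have Lj: "Lp (FC j) j \<noteq> 0" by (rule circ_nz[OF C(1)])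
      have "(\<Sum>m\<in>T. \<rho> j m * Bp r m) = X / Lp (FC j) j"
        unfolding X_def \<rho>_def by (simp add: sum_divide_distrib times_divide_eq_left)
      moreover have "Bp r j = - X / Lp (FC j) j"
      proof -
        have "Bp r j = (Lp (FC j) j * Bp r j) / Lp (FC j) j" using Lj by simp
        then show ?thesis by (simp only: s0)
      qed
      ultimately show ?thesis by simp
    qed
    have "rel Bp k c T" unfolding rel_def
    proof
      fix r assume r: "r \<in> {1..k}"
      have bt: "(\<Sum>q\<in>{1..n}. Bp r q * w q) = 0"
        using bethe r by (simp add: w_def times_divide_eq_right)
      have "(\<Sum>q\<in>{1..n}. Bp r q * w q) = (\<Sum>m\<in>T. w m * Bp r m) + (\<Sum>j\<in>{1..n} - T. w j * Bp r j)"
        using sum.subset_diff[OF Tb(1), of "\<lambda>q. Bp r q * w q"] by (simp add: mult.commute add.commute)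
      also have "(\<Sum>j\<in>{1..n} - T. w j * Bp r j) = - (\<Sum>m\<in>T. (\<Sum>j\<in>{1..n} - T. w j * \<rho> j m) * Bp r m)"
      proof -
        have "(\<Sum>j\<in>{1..n} - T. w j * Bp r j) = (\<Sum>j\<in>{1..n} - T. - (\<Sum>m\<in>T. w j * \<rho> j m * Bp r m))"
        proof (rule sum.cong[OF refl])
          fix j assume j: "j \<in> {1..n} - T"
          show "w j * Bp r j = - (\<Sum>m\<in>T. w j * \<rho> j m * Bp r m)"
            unfolding rowB[OF j r] by (simp add: sum_distrib_left mult.assoc)
        qed
        also have "\<dots> = - (\<Sum>m\<in>T. \<Sum>j\<in>{1..n} - T. w j * \<rho> j m * Bp r m)"
          by (simp only: sum_negf sum.swap[of _ "{1..n} - T"])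
        also have "\<dots> = - (\<Sum>m\<in>T. (\<Sum>j\<in>{1..n} - T. w j * \<rho> j m) * Bp r m)"
          by (simp add: sum_distrib_right)
        finally show ?thesis .
      qed
      finally show "(\<Sum>m\<in>T. c m * Bp r m) = 0"
        using bt by (simp add: c_def left_diff_distrib sum_subtractf)
    qed
    then have "c i = 0" using indep_rel[OF Tb(3)] True by blast
    then show ?thesis by (simp add: c_def mult.commute)
  qed
  finally show ?thesis by (simp add: w_def)
qed

end

theorem theorem6p1:
  fixes n k :: nat
    and b :: "nat \<Rightarrow> nat \<Rightarrow> int"
    and lam :: "nat set \<Rightarrow> nat \<Rightarrow> int"
    and a :: "nat \<Rightarrow> int"
    and x t0 :: "nat \<Rightarrow> 'p::prime_card mod_ring"
  assumes k_pos: "0 < k" and k_lt_n: "k < n"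
    and g_nonzero: "\<forall>j\<in>{1..n}. \<exists>i\<in>{1..k}. b i j \<noteq> 0"
    and g_span: "\<exists>S\<subseteq>{1..n}. card S = k \<and> indepC b k S"
    and lam_circ: "\<forall>C\<in>circuitsC b k n.
        (\<exists>i\<in>C. lam C i \<noteq> 0) \<and> (\<forall>i. i \<notin> C \<longrightarrow> lam C i = 0) \<and>
        (\<forall>l\<in>{1..k}. (\<Sum>i\<in>C. lam C i * b l i) = 0) \<and> Gcd (lam C ` C) = 1"
    and a_nonzero: "\<forall>j\<in>{1..n}. a j \<noteq> 0"
    and good_g: "\<forall>j\<in>{1..n}. \<exists>i\<in>{1..k}. (of_int (b i j) :: 'p mod_ring) \<noteq> 0"
    and good_C: "\<forall>C\<in>circuitsC b k n. \<exists>i\<in>C. (of_int (lam C i) :: 'p mod_ring) \<noteq> 0"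
    and good_circuits: "circuitsP TYPE('p) b k n = circuitsC b k n"
    and x_gen: "\<forall>C\<in>circuitsC b k n. fC lam n x C \<noteq> 0"
    and t0_gen: "\<forall>j\<in>{1..n}. fj b k x t0 j \<noteq> 0"
    and bethe: "\<forall>i\<in>{1..k}. (\<Sum>j\<in>{1..n}. of_int (b i j) * of_int (a j) / fj b k x t0 j) = 0"
  shows "singular_vec a b k n (Fxt b k n x t0)
    \<and> (\<forall>i\<in>{1..n}. Kop a b lam k n x i (Fxt b k n x t0)
          = (\<lambda>T. of_int (a i) / fj b k x t0 i * Fxt b k n x t0 T))"
proof -
  interpret setting n k b lam a x t0
    using k_pos lam_circ good_C good_circuits x_gen t0_gen bethe by unfold_locales
  have "singular_vec a b k n (Fxt b k n x t0)" by (rule singular)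
  moreover have "\<forall>i\<in>{1..n}. Kop a b lam k n x i (Fxt b k n x t0)
          = (\<lambda>T. of_int (a i) / fj b k x t0 i * Fxt b k n x t0 T)"
    using Kop_val by (simp add: fun_eq_iff)
  ultimately show ?thesis by blast
qed

end
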